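(* In the setting below, fix $x_0\in\mathcal{X}$ and suppose $P(\limsup_{n\to\infty}f(X_n)=\infty\mid x_0)=1$. Let $H\subseteq\mathcal{X}^\infty$ be the set of paths $w$ for which $Y_n(w)$ converges to a finite limit, and suppose $P(H\mid x_0)=1$. Then $C$ is $P(\cdot\mid x_0)$-recurrent.
   Context: $\mathcal{X}$ is a Polish space with Borel $\sigma$-algebra $\mathcal{B}$; $X=(X_0,X_1,\dots)$ is a Markov chain on $\mathcal{X}$ with transition kernel $T(\cdot\mid y)$; $P(\cdot\mid x_0)$ is the law on $\mathcal{X}^\infty$ of the chain started at $X_0=x_0$. $C\in\mathcal{B}$; $\tau_C$ is the smallest $n\ge1$ with $X_n\in C$ ($\tau_C=\infty$ if there is none); $E_C=\{\tau_C<\infty\}$. $C$ is $P(\cdot\mid x_0)$-recurrent if $P(E_C\mid x_0)=1$. $f:\mathcal{X}\to[0,\infty)$ is Borel measurable and $Y_n=f(X_{\tau_C\wedge n})$, $n=0,1,2,\dots$. *)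

theory Defs
  imports "HOL-Probability.Probability"
begin

text \<open>Paths are elements of the path space nat \<Rightarrow> 'a, X_n(w) = w n.
  Law of the first n+1 coordinates of the chain with kernel T started at x0,
  as a measure on PiM {0..n} (\<lambda>_. borel).\<close>
primrec path_law :: "('a::topological_space \<Rightarrow> 'a measure) \<Rightarrow> 'a \<Rightarrow> nat \<Rightarrow> (nat \<Rightarrow> 'a) measure" where
  "path_law T x0 0 =
     distr (return borel x0) (PiM {0..0} (\<lambda>_. borel)) (\<lambda>x. \<lambda>i\<in>{0..0}. x)"
| "path_law T x0 (Suc n) =
     path_law T x0 n \<bind>
       (\<lambda>p. distr (T (p n)) (PiM {0..Suc n} (\<lambda>_. borel)) (\<lambda>y. p(Suc n := y)))"

definition markov_law :: "('a::topological_space \<Rightarrow> 'a measure) \<Rightarrow> 'a \<Rightarrow> (nat \<Rightarrow> 'a) measure \<Rightarrow> bool" where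
  "markov_law T x0 M \<longleftrightarrow>
     prob_space M \<and> sets M = sets (PiM UNIV (\<lambda>_::nat. borel)) \<and>
     (\<forall>n. distr M (PiM {0..n} (\<lambda>_. borel)) (\<lambda>w. restrict w {0..n}) = path_law T x0 n)"

definition hit_time :: "'a set \<Rightarrow> (nat \<Rightarrow> 'a) \<Rightarrow> enat" where
  "hit_time C w = (if \<exists>n\<ge>1. w n \<in> C then enat (LEAST n. n \<ge> 1 \<and> w n \<in> C) else \<infinity>)"

definition stopped_proc :: "'a set \<Rightarrow> ('a \<Rightarrow> real) \<Rightarrow> nat \<Rightarrow> (nat \<Rightarrow> 'a) \<Rightarrow> real" where
  "stopped_proc C f n w = f (w (the_enat (min (hit_time C w) (enat n))))"

definition recurrent :: "(nat \<Rightarrow> 'a) measure \<Rightarrow> 'a set \<Rightarrow> bool" where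
  "recurrent M C \<longleftrightarrow> measure M {w \<in> space M. hit_time C w < \<infinity>} = 1"

end

theory Submission
  imports Defs
begin

lemma key:
  fixes f :: "'a \<Rightarrow> real"
  assumes "limsup (\<lambda>n. ereal (f (w n))) = \<infinity>"
    and "convergent (\<lambda>n. stopped_proc C f n w)"
  shows "hit_time C w < \<infinity>"
proof (rule ccontr)
  assume "\<not> hit_time C w < \<infinity>"
  then have h: "hit_time C w = \<infinity>" by simp
  then have "(\<lambda>n. stopped_proc C f n w) = (\<lambda>n. f (w n))"
    by (auto simp: stopped_proc_def)
  with assms(2) obtain L where "(\<lambda>n. f (w n)) \<longlonglongrightarrow> L"
    by (auto simp: convergent_def)
  then have "(\<lambda>n. ereal (f (w n))) \<longlonglongrightarrow> ereal L" by (rule tendsto_ereal)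
  then have "limsup (\<lambda>n. ereal (f (w n))) = ereal L"
    by (rule lim_imp_Limsup[OF trivial_limit_sequentially])
  with assms(1) show False by simp
qed

theorem theorem4p1:
  fixes T :: "'a::polish_space \<Rightarrow> 'a measure"
    and x0 :: 'a and M :: "(nat \<Rightarrow> 'a) measure" and C :: "'a set" and f :: "'a \<Rightarrow> real"
  assumes kernel: "T \<in> borel \<rightarrow>\<^sub>M prob_algebra borel"
    and law: "markov_law T x0 M"
    and C: "C \<in> sets borel"
    and f_meas: "f \<in> borel_measurable borel"
    and f_nonneg: "\<And>x. f x \<ge> 0"
    and limsup: "measure M {w \<in> space M. limsup (\<lambda>n. ereal (f (w n))) = \<infinity>} = 1"
    and H: "measure M {w \<in> space M. convergent (\<lambda>n. stopped_proc C f n w)} = 1"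
  shows "recurrent M C"
proof -
  have P: "prob_space M" and S: "sets M = sets (PiM UNIV (\<lambda>_::nat. borel))"
    using law by (auto simp: markov_law_def)
  interpret prob_space M by (rule P)
  have comp: "(\<lambda>w. w n) \<in> M \<rightarrow>\<^sub>M borel" for n
  proof -
    have "(\<lambda>w. w n) \<in> PiM UNIV (\<lambda>_::nat. borel) \<rightarrow>\<^sub>M (borel :: 'a measure)"
      by (rule measurable_component_singleton) simp
    then show ?thesis by (subst measurable_cong_sets[OF S refl])
  qed
  have eq: "{w \<in> space M. hit_time C w < \<infinity>} = (\<Union>n. {w \<in> space M. w (Suc n) \<in> C})"
    by (auto simp: hit_time_def) (metis Suc_le_D)
  have meas: "{w \<in> space M. hit_time C w < \<infinity>} \<in> sets M"
    unfolding eq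
  proof (intro sets.countable_UN subsetI)
    fix A assume "A \<in> range (\<lambda>n. {w \<in> space M. w (Suc n) \<in> C})"
    then obtain n where A: "A = {w \<in> space M. w (Suc n) \<in> C}" by auto
    have "(\<lambda>w. w (Suc n)) -` C \<inter> space M \<in> sets M"
      by (rule measurable_sets[OF comp C])
    then show "A \<in> sets M" unfolding A by (simp add: vimage_def Int_def conj_commute)
  qed
  have a1: "AE w in M. w \<in> {w \<in> space M. limsup (\<lambda>n. ereal (f (w n))) = \<infinity>}"
    by (rule AE_prob_1[OF limsup])
  have a2: "AE w in M. w \<in> {w \<in> space M. convergent (\<lambda>n. stopped_proc C f n w)}"
    by (rule AE_prob_1[OF H])
  have "AE w in M. w \<in> {w \<in> space M. hit_time C w < \<infinity>}"
    using a1 a2 by eventually_elim (use key in blast)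
  then show ?thesis
    unfolding recurrent_def using AE_in_set_eq_1[OF meas] by simp
qed

end
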